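(* Fix a real number $\theta>0$ with $\theta\neq 1$ and an integer $N\ge 1$. Choose $\pi\in\mathfrak{S}_N$ at random with probability \[ f(\pi)=\frac{\theta^{\pi^{-1}(N)-1}}{\sum_{\sigma\in\mathfrak{S}_N}\theta^{\sigma^{-1}(N)-1}}. \] Then the probability that the $r$-positional strategy wins (i.e. that $\pi$ is $r$-winnable) is \[ P_r(N,\theta)=\frac{r(1-\theta)\sum_{i=r}^{N-1}\frac{\theta^i}{i}}{1-\theta^N} \] for $1\le r\le N-1$, and is $\frac{1-\theta}{1-\theta^N}$ for $r=0$.
   Context: $\mathfrak{S}_N$ is the set of permutations $\pi=[\pi_1\pi_2\cdots\pi_N]$ of $\{1,\dots,N\}$ in one-line notation; $\pi^{-1}(N)$ is the position of the entry $N$. A left-to-right maximum of $\pi$ is an entry $\pi_j$ larger than every $\pi_i$ with $i<j$. For $r\ge 0$, the $r$-positional strategy rejects $\pi_1,\dots,\pi_r$ and then accepts the first subsequent left-to-right maximum (so for $r=0$ it accepts $\pi_1$); it wins if the accepted entry is $N$, and $\pi$ is then called $r$-winnable. *)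

theory Defs
  imports Complex_Main "HOL-Combinatorics.Permutations"
begin

text \<open>A permutation pi of {1..N} is modelled as a function p with p permutes {1..N};
  its one-line entry at position i is p i. The position of the entry N is inv p N.\<close>

definition perms :: "nat \<Rightarrow> (nat \<Rightarrow> nat) set" where
  "perms N = {p. p permutes {1..N}}"

definition lr_max :: "(nat \<Rightarrow> nat) \<Rightarrow> nat \<Rightarrow> bool" where
  "lr_max p j \<longleftrightarrow> (\<forall>i. 1 \<le> i \<and> i < j \<longrightarrow> p i < p j)"

text \<open>The r-positional strategy accepts the first left-to-right maximum at a position
  j with r < j \<le> N (for r = 0 this is position 1); it wins iff that entry is N.\<close>
definition r_winnable :: "nat \<Rightarrow> nat \<Rightarrow> (nat \<Rightarrow> nat) \<Rightarrow> bool" where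
  "r_winnable N r p \<longleftrightarrow>
     (\<exists>j. r < j \<and> j \<le> N \<and> lr_max p j \<and> (\<forall>k. r < k \<and> k < j \<longrightarrow> \<not> lr_max p k) \<and> p j = N)"

definition weight :: "real \<Rightarrow> nat \<Rightarrow> (nat \<Rightarrow> nat) \<Rightarrow> real" where
  "weight \<theta> N p = \<theta> ^ (inv p N - 1)"

definition f_prob :: "real \<Rightarrow> nat \<Rightarrow> (nat \<Rightarrow> nat) \<Rightarrow> real" where
  "f_prob \<theta> N p = weight \<theta> N p / (\<Sum>s\<in>perms N. weight \<theta> N s)"

definition win_prob :: "real \<Rightarrow> nat \<Rightarrow> nat \<Rightarrow> real" where
  "win_prob \<theta> N r = (\<Sum>p\<in>{p\<in>perms N. r_winnable N r p}. f_prob \<theta> N p)"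

end

theory Submission
  imports Defs
begin

definition A_set :: "nat \<Rightarrow> nat \<Rightarrow> (nat \<Rightarrow> nat) set" where
  "A_set N m = {p \<in> perms N. p m = N}"

definition F_set :: "nat \<Rightarrow> nat \<Rightarrow> nat \<Rightarrow> (nat \<Rightarrow> nat) set" where
  "F_set N m j = {p \<in> A_set N m. \<forall>i\<in>{1..<m}. p i \<le> p j}"

lemma swap_card:
  assumes "\<And>p. p \<in> X \<Longrightarrow> p \<circ> transpose a b \<in> Y"
    and "\<And>q. q \<in> Y \<Longrightarrow> q \<circ> transpose a b \<in> X"
  shows "card X = card Y"
proof -
  have "bij_betw (\<lambda>p. p \<circ> transpose a b) X Y"
    by (rule bij_betw_byWitness[where f'="\<lambda>p. p \<circ> transpose a b"])
       (use assms in \<open>auto simp: comp_assoc\<close>)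
  then show ?thesis by (rule bij_betw_same_card)
qed

lemma finite_perms: "finite (perms N)"
  unfolding perms_def by (rule finite_permutations) simp

lemma finite_A: "finite (A_set N m)"
  unfolding A_set_def using finite_perms by simp

lemma finite_F: "finite (F_set N m j)"
  unfolding F_set_def using finite_A by simp

lemma perm_inj: "p \<in> perms N \<Longrightarrow> p i = p j \<Longrightarrow> i = j"
  unfolding perms_def by (metis mem_Collect_eq permutes_inj injD)

lemma perm_range: "p \<in> perms N \<Longrightarrow> i \<in> {1..N} \<Longrightarrow> p i \<in> {1..N}"
  unfolding perms_def by (metis mem_Collect_eq permutes_in_image)

lemma perm_swap: "p \<in> perms N \<Longrightarrow> a \<in> {1..N} \<Longrightarrow> b \<in> {1..N} \<Longrightarrow> p \<circ> transpose a b \<in> perms N"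
  unfolding perms_def by (simp add: permutes_compose permutes_swap_id)

lemma card_A_eq:
  assumes "m \<in> {1..N}" "m' \<in> {1..N}"
  shows "card (A_set N m) = card (A_set N m')"
  by (rule swap_card[where a=m and b=m'])
     (use assms in \<open>auto simp: A_set_def perm_swap\<close>)

lemma card_F_eq:
  assumes "j \<in> {1..<m}" "j' \<in> {1..<m}" "m \<le> N"
  shows "card (F_set N m j) = card (F_set N m j')"
proof -
  have t: "transpose j j' i \<in> {1..<m}" if "i \<in> {1..<m}" for i
    using that assms by (auto simp: transpose_def)
  have tm: "transpose j j' m = m" using assms by (auto simp: transpose_def)
  have jN: "j \<in> {1..N}" "j' \<in> {1..N}" using assms by auto
  show ?thesis
  proof (rule swap_card[where a=j and b=j'])
    fix p assume p: "p \<in> F_set N m j"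
    show "p \<circ> transpose j j' \<in> F_set N m j'"
      using p t tm jN unfolding F_set_def A_set_def by (auto simp: perm_swap)
  next
    fix p assume p: "p \<in> F_set N m j'"
    show "p \<circ> transpose j j' \<in> F_set N m j"
      using p t tm jN unfolding F_set_def A_set_def by (auto simp: perm_swap)
  qed
qed


lemma A_union:
  assumes "2 \<le> m" "m \<le> N"
  shows "A_set N m = (\<Union>j\<in>{1..<m}. F_set N m j)"
proof
  show "(\<Union>j\<in>{1..<m}. F_set N m j) \<subseteq> A_set N m" unfolding F_set_def by auto
next
  show "A_set N m \<subseteq> (\<Union>j\<in>{1..<m}. F_set N m j)"
  proof
    fix p assume p: "p \<in> A_set N m"
    define M where "M = Max (p ` {1..<m})"
    have "M \<in> p ` {1..<m}" unfolding M_def using assms by (intro Max_in) auto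
    then obtain j where j: "j \<in> {1..<m}" "p j = M" by auto
    have "\<forall>i\<in>{1..<m}. p i \<le> p j" using j unfolding M_def by auto
    then show "p \<in> (\<Union>j\<in>{1..<m}. F_set N m j)" using p j unfolding F_set_def by auto
  qed
qed

lemma F_disj:
  assumes "j \<in> {1..<m}" "j' \<in> {1..<m}" "j \<noteq> j'"
  shows "F_set N m j \<inter> F_set N m j' = {}"
proof (rule ccontr)
  assume "F_set N m j \<inter> F_set N m j' \<noteq> {}"
  then obtain p where p: "p \<in> F_set N m j" "p \<in> F_set N m j'" by blast
  then have "p j \<le> p j'" "p j' \<le> p j" using assms unfolding F_set_def by auto
  then have "p j = p j'" by simp
  moreover have "p \<in> perms N" using p unfolding F_set_def A_set_def by auto
  ultimately show False using perm_inj assms by blast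
qed

lemma card_A_F:
  assumes "2 \<le> m" "m \<le> N"
  shows "card (A_set N m) = (m - 1) * card (F_set N m 1)"
proof -
  have "card (A_set N m) = (\<Sum>j\<in>{1..<m}. card (F_set N m j))"
    unfolding A_union[OF assms]
    by (rule card_UN_disjoint) (auto simp: finite_F F_disj)
  also have "\<dots> = (\<Sum>j\<in>{1..<m}. card (F_set N m 1))"
    by (rule sum.cong) (use assms in \<open>auto intro: card_F_eq\<close>)
  finally show ?thesis by simp
qed

lemma card_win:
  assumes "1 \<le> r" "r < m" "m \<le> N"
  shows "card (\<Union>j\<in>{1..r}. F_set N m j) = r * card (F_set N m 1)"
proof -
  have "card (\<Union>j\<in>{1..r}. F_set N m j) = (\<Sum>j\<in>{1..r}. card (F_set N m j))"
  proof (rule card_UN_disjoint)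
    show "\<forall>i\<in>{1..r}. \<forall>j\<in>{1..r}. i \<noteq> j \<longrightarrow> F_set N m i \<inter> F_set N m j = {}"
    proof (intro ballI impI)
      fix i j assume "i \<in> {1..r}" "j \<in> {1..r}" "i \<noteq> j"
      then show "F_set N m i \<inter> F_set N m j = {}" using assms by (intro F_disj) auto
    qed
  qed (auto simp: finite_F)
  also have "\<dots> = (\<Sum>j\<in>{1..r}. card (F_set N m 1))"
    by (rule sum.cong) (use assms in \<open>auto intro: card_F_eq\<close>)
  finally show ?thesis by simp
qed

lemma lt_N:
  assumes "p \<in> A_set N m" "i \<in> {1..N}" "i \<noteq> m"
  shows "p i < N"
proof -
  have pp: "p \<in> perms N" "p m = N" using assms unfolding A_set_def by auto
  have "p i \<in> {1..N}" using perm_range pp assms by blast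
  moreover have "p i \<noteq> N" using perm_inj[OF pp(1), of i m] pp assms by auto
  ultimately show ?thesis by auto
qed

lemma win_pos:
  assumes "p \<in> A_set N m" "m \<in> {1..N}" "r_winnable N r p"
  shows "r < m \<and> (\<forall>k. r < k \<and> k < m \<longrightarrow> \<not> lr_max p k)"
proof -
  have pp: "p \<in> perms N" "p m = N" using assms unfolding A_set_def by auto
  obtain j where j: "r < j" "j \<le> N" "lr_max p j" "\<forall>k. r < k \<and> k < j \<longrightarrow> \<not> lr_max p k" "p j = N"
    using assms(3) unfolding r_winnable_def by blast
  have "j = m" using perm_inj[OF pp(1), of j m] j pp by auto
  then show ?thesis using j by auto
qed

lemma win_iff:
  assumes "p \<in> A_set N m" "m \<le> N" "1 \<le> r" "r < m"
  shows "r_winnable N r p \<longleftrightarrow> p \<in> (\<Union>j\<in>{1..r}. F_set N m j)"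
proof
  assume w: "r_winnable N r p"
  have nk: "\<forall>k. r < k \<and> k < m \<longrightarrow> \<not> lr_max p k" using win_pos[OF assms(1) _ w] assms by auto
  have "p \<in> (\<Union>j\<in>{1..<m}. F_set N m j)" using A_union[of m N] assms by auto
  then obtain j where j: "j \<in> {1..<m}" "p \<in> F_set N m j" by auto
  have pp: "p \<in> perms N" using assms unfolding A_set_def by auto
  have "j \<le> r"
  proof (rule ccontr)
    assume "\<not> j \<le> r"
    moreover have "lr_max p j"
      unfolding lr_max_def
    proof (intro allI impI)
      fix i assume i: "1 \<le> i \<and> i < j"
      have "p i \<le> p j" using i j unfolding F_set_def by auto
      moreover have "p i \<noteq> p j" using perm_inj[OF pp, of i j] i by auto
      ultimately show "p i < p j" by simp
    qed
    ultimately show False using nk j by auto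
  qed
  then show "p \<in> (\<Union>j\<in>{1..r}. F_set N m j)" using j by auto
next
  assume "p \<in> (\<Union>j\<in>{1..r}. F_set N m j)"
  then obtain j where j: "j \<in> {1..r}" "p \<in> F_set N m j" by auto
  have pm: "p m = N" using assms unfolding A_set_def by auto
  have "lr_max p m" unfolding lr_max_def
  proof (intro allI impI)
    fix i assume "1 \<le> i \<and> i < m"
    then show "p i < p m" using lt_N[OF assms(1), of i] pm assms by auto
  qed
  moreover have "\<forall>k. r < k \<and> k < m \<longrightarrow> \<not> lr_max p k"
  proof (intro allI impI)
    fix k assume k: "r < k \<and> k < m"
    have "p k \<le> p j" using j k unfolding F_set_def by auto
    then show "\<not> lr_max p k" using j k unfolding lr_max_def by fastforce
  qed
  ultimately show "r_winnable N r p" unfolding r_winnable_def using assms pm by blast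
qed

lemma win0:
  assumes "p \<in> perms N" "1 \<le> N"
  shows "r_winnable N 0 p \<longleftrightarrow> p 1 = N"
proof
  assume "r_winnable N 0 p"
  then obtain j where j: "0 < j" "j \<le> N" "\<forall>k. 0 < k \<and> k < j \<longrightarrow> \<not> lr_max p k" "p j = N"
    unfolding r_winnable_def by blast
  have "lr_max p 1" unfolding lr_max_def by auto
  then have "j = 1" using j by (metis One_nat_def Suc_lessI zero_less_one)
  then show "p 1 = N" using j by simp
next
  assume "p 1 = N"
  moreover have "lr_max p 1" unfolding lr_max_def by auto
  ultimately show "r_winnable N 0 p" unfolding r_winnable_def using assms by fastforce
qed

lemma perms_split:
  assumes "1 \<le> N"
  shows "(\<Sum>p\<in>perms N. g p) = (\<Sum>m=1..N. \<Sum>p\<in>A_set N m. (g p :: real))"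
proof -
  have eq: "perms N = (\<Union>m\<in>{1..N}. A_set N m)"
  proof
    show "perms N \<subseteq> (\<Union>m\<in>{1..N}. A_set N m)"
    proof
      fix p assume p: "p \<in> perms N"
      then have "p ` {1..N} = {1..N}" unfolding perms_def by (simp add: permutes_image)
      then obtain m where "m \<in> {1..N}" "p m = N" using assms
        by (metis atLeastAtMost_iff imageE order_refl)
      then show "p \<in> (\<Union>m\<in>{1..N}. A_set N m)" using p unfolding A_set_def by auto
    qed
  qed (auto simp: A_set_def)
  show ?thesis unfolding eq
  proof (rule sum.UNION_disjoint)
    show "\<forall>i\<in>{1..N}. \<forall>j\<in>{1..N}. i \<noteq> j \<longrightarrow> A_set N i \<inter> A_set N j = {}"
      unfolding A_set_def using perm_inj by fastforce
  qed (auto simp: finite_A)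
qed

lemma weight_A:
  assumes "p \<in> A_set N m" shows "weight \<theta> N p = \<theta> ^ (m - 1)"
proof -
  have "p permutes {1..N}" "p m = N" using assms unfolding A_set_def perms_def by auto
  then have "inv p N = m" using permutes_inverses(2)[of p "{1..N}" m] by simp
  then show ?thesis unfolding weight_def by simp
qed

lemma sum_A:
  "(\<Sum>p\<in>A_set N m. if r_winnable N r p then weight \<theta> N p else 0)
     = \<theta> ^ (m - 1) * real (card {p\<in>A_set N m. r_winnable N r p})"
proof -
  have "(\<Sum>p\<in>A_set N m. if r_winnable N r p then weight \<theta> N p else 0)
      = (\<Sum>p\<in>A_set N m. if r_winnable N r p then \<theta> ^ (m - 1) else 0)"
    by (rule sum.cong) (auto simp: weight_A)
  also have "\<dots> = (\<Sum>p\<in>{p\<in>A_set N m. r_winnable N r p}. \<theta> ^ (m - 1))"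
    by (rule sum.inter_filter[symmetric]) (rule finite_A)
  finally show ?thesis by simp
qed

theorem theorem2p3:
  fixes \<theta> :: real and N r :: nat
  assumes "\<theta> > 0" and "\<theta> \<noteq> 1" and "N \<ge> 1" and "r \<le> N - 1"
  shows "win_prob \<theta> N r =
    (if r = 0 then (1 - \<theta>) / (1 - \<theta> ^ N)
     else real r * (1 - \<theta>) * (\<Sum>i=r..N-1. \<theta> ^ i / real i) / (1 - \<theta> ^ N))"
proof -
  define K where "K = card (A_set N 1)"
  have KA: "card (A_set N m) = K" if "m \<in> {1..N}" for m
    unfolding K_def using card_A_eq[OF that, of 1] assms by auto
  have "transpose 1 N \<in> A_set N 1"
    unfolding A_set_def perms_def using assms by (auto intro: permutes_swap_id)
  then have Kpos: "K > 0" unfolding K_def using finite_A card_gt_0_iff by blast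
  have thN: "1 - \<theta> ^ N \<noteq> 0"
    using assms power_eq_1_iff[of \<theta> N] by auto
  have th1: "1 - \<theta> \<noteq> 0" using assms by auto
  have gsum: "(\<Sum>m=1..N. \<theta> ^ (m - 1)) = (1 - \<theta> ^ N) / (1 - \<theta>)"
  proof -
    have "(\<Sum>m=1..N. \<theta> ^ (m - 1)) = (\<Sum>i<N. \<theta> ^ i)"
      by (simp add: sum.atLeast1_atMost_eq)
    then show ?thesis using sum_gp_strict[of \<theta> N] assms by simp
  qed
  have Dsum: "(\<Sum>s\<in>perms N. weight \<theta> N s) = real K * ((1 - \<theta> ^ N) / (1 - \<theta>))"
  proof -
    have "(\<Sum>s\<in>perms N. weight \<theta> N s) = (\<Sum>m=1..N. \<Sum>p\<in>A_set N m. weight \<theta> N p)"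
      by (rule perms_split) (use assms in auto)
    also have "\<dots> = (\<Sum>m=1..N. real K * \<theta> ^ (m - 1))"
      by (rule sum.cong) (auto simp: weight_A KA)
    also have "\<dots> = real K * (\<Sum>m=1..N. \<theta> ^ (m - 1))"
      by (simp only: sum_distrib_left)
    finally show ?thesis by (simp only: gsum)
  qed
  have Wsum: "(\<Sum>p\<in>{p\<in>perms N. r_winnable N r p}. weight \<theta> N p)
     = (\<Sum>m=1..N. \<theta> ^ (m - 1) * real (card {p\<in>A_set N m. r_winnable N r p}))"
  proof -
    have "(\<Sum>p\<in>{p\<in>perms N. r_winnable N r p}. weight \<theta> N p)
       = (\<Sum>p\<in>perms N. if r_winnable N r p then weight \<theta> N p else 0)"
      by (rule sum.inter_filter) (rule finite_perms)
    also have "\<dots> = (\<Sum>m=1..N. \<Sum>p\<in>A_set N m. if r_winnable N r p then weight \<theta> N p else 0)"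
      by (rule perms_split) (use assms in auto)
    finally show ?thesis by (simp add: sum_A)
  qed
  have wp: "win_prob \<theta> N r = (\<Sum>p\<in>{p\<in>perms N. r_winnable N r p}. weight \<theta> N p)
      / (\<Sum>s\<in>perms N. weight \<theta> N s)"
    unfolding win_prob_def f_prob_def by (simp add: sum_divide_distrib)
  show ?thesis
  proof (cases "r = 0")
    case True
    have c: "card {p\<in>A_set N m. r_winnable N r p} = (if m = 1 then K else 0)" if "m \<in> {1..N}" for m
    proof -
      have "r_winnable N r p \<longleftrightarrow> m = 1" if p: "p \<in> A_set N m" for p
      proof -
        have pp: "p \<in> perms N" "p m = N" using p unfolding A_set_def by auto
        have "r_winnable N r p \<longleftrightarrow> p 1 = N" using win0[OF pp(1)] True assms by simp
        also have "\<dots> \<longleftrightarrow> m = 1" using perm_inj[OF pp(1), of 1 m] pp by auto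
        finally show ?thesis .
      qed
      then have "{p\<in>A_set N m. r_winnable N r p} = (if m = 1 then A_set N m else {})"
        by auto
      then show ?thesis using KA that by auto
    qed
    have "(\<Sum>m=1..N. \<theta> ^ (m - 1) * real (card {p\<in>A_set N m. r_winnable N r p}))
       = (\<Sum>m=1..N. if m = 1 then real K else 0)"
      by (rule sum.cong) (auto simp: c)
    also have "\<dots> = real K" using assms by simp
    finally show ?thesis using True Kpos thN th1 unfolding wp Wsum Dsum by (simp add: field_simps)
  next
    case False
    have c: "real (card {p\<in>A_set N m. r_winnable N r p}) = (if r < m then real r * real K / real (m - 1) else 0)"
      if "m \<in> {1..N}" for m
    proof (cases "r < m")
      case True
      have "{p\<in>A_set N m. r_winnable N r p} = (\<Union>j\<in>{1..r}. F_set N m j)"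
        using win_iff[of _ N m r] True False that unfolding F_set_def by auto
      then have "card {p\<in>A_set N m. r_winnable N r p} = r * card (F_set N m 1)"
        using card_win[of r m N] True False that by auto
      moreover have "K = (m - 1) * card (F_set N m 1)"
        using card_A_F[of m N] KA[OF that] True False that by auto
      moreover have "m - 1 > 0" using True False by auto
      ultimately show ?thesis using True by (simp add: field_simps)
    next
      case nt: False
      have e: "{p\<in>A_set N m. r_winnable N r p} = {}"
        using win_pos[of _ N m r] nt that by auto
      show ?thesis unfolding e using nt by simp
    qed
    have "(\<Sum>m=1..N. \<theta> ^ (m - 1) * real (card {p\<in>A_set N m. r_winnable N r p}))
       = (\<Sum>m=1..N. if r < m then real r * real K * (\<theta> ^ (m - 1) / real (m - 1)) else 0)"
      by (rule sum.cong) (auto simp: c)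
    also have "\<dots> = (\<Sum>m\<in>{m\<in>{1..N}. r < m}. real r * real K * (\<theta> ^ (m - 1) / real (m - 1)))"
      by (rule sum.inter_filter[symmetric]) simp
    also have "{m\<in>{1..N}. r < m} = {Suc r..N}" using False by auto
    also have "(\<Sum>m=Suc r..N. real r * real K * (\<theta> ^ (m - 1) / real (m - 1)))
        = real r * real K * (\<Sum>m=Suc r..Suc (N - 1). \<theta> ^ (m - 1) / real (m - 1))"
      using assms by (simp add: sum_distrib_left)
    also have "(\<Sum>m=Suc r..Suc (N - 1). \<theta> ^ (m - 1) / real (m - 1)) = (\<Sum>i=r..N-1. \<theta> ^ i / real i)"
      by (simp only: sum.shift_bounds_cl_Suc_ivl) simp
    finally show ?thesis using False Kpos thN th1 unfolding wp Wsum Dsum by (simp add: field_simps)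
  qed
qed

end
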